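(* There is an absolute constant $C>0$ (independent of $n$, $f$, $g$, $x$) such that for all real-valued $f,g\in C^{3}[0,1]$, all $x\in[0,1]$ and $n\in\mathbb{N}$, $$n\left|B_{n}(fg)(x)-B_{n}(f)(x)B_{n}(g)(x)-\frac{x(1-x)}{n}f'(x)g'(x)\right|\le C\,x(1-x)\frac{1}{\sqrt{n}}\max\{\|f\|,\|f'''\|\}\cdot\max\{\|g\|,\|g'''\|\}.$$
   Context: For $f:[0,1]\to\mathbb{R}$ the Bernstein polynomials are $B_{n}(f)(x)=\sum_{k=0}^{n}\binom{n}{k}x^{k}(1-x)^{n-k}f(k/n)$. $\|\cdot\|$ denotes the uniform norm on $C[0,1]$. *)

theory Defs
  imports "HOL-Analysis.Analysis"
begin

definition bernstein :: "nat \<Rightarrow> (real \<Rightarrow> real) \<Rightarrow> real \<Rightarrow> real" where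
  "bernstein n f x = (\<Sum>k\<le>n. real (n choose k) * x ^ k * (1 - x) ^ (n - k) * f (real k / real n))"

definition sup_norm01 :: "(real \<Rightarrow> real) \<Rightarrow> real" where
  "sup_norm01 f = (SUP t\<in>{0..1}. \<bar>f t\<bar>)"

text \<open>f is in C^3[0,1] with derivatives f1 = f', f2 = f'', f3 = f''' (one-sided at endpoints).\<close>
definition C3_01 :: "(real \<Rightarrow> real) \<Rightarrow> (real \<Rightarrow> real) \<Rightarrow> (real \<Rightarrow> real) \<Rightarrow> (real \<Rightarrow> real) \<Rightarrow> bool" where
  "C3_01 f f1 f2 f3 \<longleftrightarrow>
     (\<forall>t\<in>{0..1}. (f has_real_derivative f1 t) (at t within {0..1})
                \<and> (f1 has_real_derivative f2 t) (at t within {0..1})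
                \<and> (f2 has_real_derivative f3 t) (at t within {0..1}))
     \<and> continuous_on {0..1} f3"

end

theory Submission
  imports Defs
begin


definition EE :: "real \<Rightarrow> nat \<Rightarrow> (nat \<Rightarrow> real) \<Rightarrow> real" where
  "EE x m p = (\<Sum>k\<le>m. real (m choose k) * x ^ k * (1 - x) ^ (m - k) * p k)"

lemma EE_one: "EE x m (\<lambda>k. 1) = 1"
  using binomial_ring[of x "1 - x" m] by (simp add: EE_def)

lemma EE_lin: "EE x m (\<lambda>k. a * p k + q k) = a * EE x m p + EE x m q"
  by (simp add: EE_def sum.distrib sum_distrib_left algebra_simps)

lemma EE_const: "EE x m (\<lambda>k. c) = c"
proof -
  have z: "EE x m (\<lambda>k. 0) = 0" by (simp add: EE_def)
  have "EE x m (\<lambda>k. c * 1 + 0) = c * EE x m (\<lambda>k. 1) + EE x m (\<lambda>k. 0)" by (rule EE_lin)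
  then show ?thesis unfolding z EE_one by simp
qed

lemma EE_cong: "(\<And>k. p k = q k) \<Longrightarrow> EE x m p = EE x m q"
  by (simp add: EE_def)

lemma EE_shift: "EE x (Suc m) (\<lambda>k. real k * p k) = real (Suc m) * x * EE x m (\<lambda>k. p (Suc k))"
proof -
  have "EE x (Suc m) (\<lambda>k. real k * p k) =
     (\<Sum>j\<le>m. real (Suc m choose Suc j) * x ^ Suc j * (1 - x) ^ (Suc m - Suc j) * (real (Suc j) * p (Suc j)))"
    unfolding EE_def sum.atMost_Suc_shift by simp
  also have "\<dots> = (\<Sum>j\<le>m. real (Suc m) * x * (real (m choose j) * x ^ j * (1 - x) ^ (m - j) * p (Suc j)))"
  proof (rule sum.cong[OF refl])
    fix j assume "j \<in> {..m}"
    have h: "real (Suc m choose Suc j) * real (Suc j) = real (Suc m) * real (m choose j)"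
      using Suc_times_binomial[of j m] by (metis of_nat_mult mult.commute)
    have "real (Suc m choose Suc j) * x ^ Suc j * (1 - x) ^ (Suc m - Suc j) * (real (Suc j) * p (Suc j))
      = (real (Suc m choose Suc j) * real (Suc j)) * (x * (x ^ j * ((1 - x) ^ (m - j) * p (Suc j))))"
      by (simp only: power_Suc diff_Suc_Suc mult_ac)
    also have "\<dots> = real (Suc m) * x * (real (m choose j) * x ^ j * (1 - x) ^ (m - j) * p (Suc j))"
      unfolding h by (simp only: mult_ac)
    finally show "real (Suc m choose Suc j) * x ^ Suc j * (1 - x) ^ (Suc m - Suc j) * (real (Suc j) * p (Suc j))
      = real (Suc m) * x * (real (m choose j) * x ^ j * (1 - x) ^ (m - j) * p (Suc j))" .
  qed
  finally show ?thesis by (simp add: EE_def sum_distrib_left)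
qed

lemma EE_zero: "EE x 0 p = p 0"
  by (simp add: EE_def)

lemma m1: "EE x m (\<lambda>k. real k) = real m * x"
proof (cases m)
  case 0 then show ?thesis by (simp add: EE_zero)
next
  case (Suc m')
  have "EE x m (\<lambda>k. real k) = EE x (Suc m') (\<lambda>k. real k * 1)" using Suc by simp
  also have "\<dots> = real m * x" unfolding EE_shift EE_one using Suc by simp
  finally show ?thesis .
qed

lemma m2: "EE x m (\<lambda>k. real k ^ 2) = real m * (real m - 1) * x^2 + real m * x"
proof (cases m)
  case 0 then show ?thesis by (simp add: EE_zero)
next
  case (Suc m')
  have a: "EE x m' (\<lambda>k. real (Suc k)) = real m' * x + 1"
    using EE_lin[of x m' 1 "\<lambda>k. real k" "\<lambda>k. 1"] m1[of x m'] EE_one[of x m'] 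
    by (simp only: of_nat_Suc mult_1 add.commute)
  have "EE x m (\<lambda>k. real k ^ 2) = EE x (Suc m') (\<lambda>k. real k * real k)" using Suc by (simp add: power2_eq_square)
  also have "\<dots> = real (Suc m') * x * (real m' * x + 1)" unfolding EE_shift a ..
  finally show ?thesis using Suc by (simp add: power2_eq_square algebra_simps)
qed

lemma m3: "EE x m (\<lambda>k. real k ^ 3) = real m * (real m - 1) * (real m - 2) * x^3 + 3 * real m * (real m - 1) * x^2 + real m * x"
proof (cases m)
  case 0 then show ?thesis by (simp add: EE_zero)
next
  case (Suc m')
  have e: "EE x m' (\<lambda>k. real (Suc k) ^ 2) = EE x m' (\<lambda>k. 1 * real k ^ 2 + (2 * real k + 1))"
    by (rule EE_cong) (simp add: power2_eq_square algebra_simps)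
  have a: "EE x m' (\<lambda>k. real (Suc k) ^ 2) = EE x m' (\<lambda>k. real k ^ 2) + 2 * (real m' * x) + 1"
    unfolding e EE_lin m1 EE_one by simp
  have "EE x m (\<lambda>k. real k ^ 3) = EE x (Suc m') (\<lambda>k. real k * real k ^ 2)" unfolding Suc
    by (rule EE_cong) (simp add: power3_eq_cube power2_eq_square)
  also have "\<dots> = real (Suc m') * x * (EE x m' (\<lambda>k. real k ^ 2) + 2 * (real m' * x) + 1)" unfolding EE_shift a ..
  finally show ?thesis using Suc unfolding m2 by (simp add: power2_eq_square power3_eq_cube algebra_simps)
qed

lemma poly4: "(M+1)*x*((M*(M-1)*(M-2)*x^3 + 3*M*(M-1)*x^2 + M*x) + 3*(M*(M-1)*x^2+M*x) + 3*(M*x) + 1)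
  = (M+1)*((M+1)-1)*((M+1)-2)*((M+1)-3)*x^4 + 6*(M+1)*((M+1)-1)*((M+1)-2)*x^3 + 7*(M+1)*((M+1)-1)*x^2 + (M+1)*x"
  for M x :: real
  by (simp add: algebra_simps power2_eq_square power3_eq_cube power4_eq_xxxx)

lemma polyc4: "(M*(M-1)*(M-2)*(M-3)*x^4 + 6*M*(M-1)*(M-2)*x^3 + 7*M*(M-1)*x^2 + M*x) + (-4*M*x)*(M*(M-1)*(M-2)*x^3 + 3*M*(M-1)*x^2 + M*x)
  + (6*(M*x)^2) * (M*(M-1)*x^2 + M*x) + (-4*(M*x)^3)*(M*x) + (M*x)^4 = 3*M^2*(x*(1-x))^2 + M*(x*(1-x))*(1-6*(x*(1-x)))"
  for M x :: real
  by algebra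

lemma m4: "EE x m (\<lambda>k. real k ^ 4) = real m * (real m - 1) * (real m - 2) * (real m - 3) * x^4
   + 6 * real m * (real m - 1) * (real m - 2) * x^3 + 7 * real m * (real m - 1) * x^2 + real m * x"
proof (cases m)
  case 0 then show ?thesis by (simp add: EE_zero)
next
  case (Suc m')
  have e: "EE x m' (\<lambda>k. real (Suc k) ^ 3) = EE x m' (\<lambda>k. 1 * real k ^ 3 + (3 * real k ^ 2 + (3 * real k + 1)))"
    by (rule EE_cong) (simp add: power3_eq_cube power2_eq_square algebra_simps)
  have a: "EE x m' (\<lambda>k. real (Suc k) ^ 3) = EE x m' (\<lambda>k. real k ^ 3) + 3 * EE x m' (\<lambda>k. real k ^ 2) + 3 * (real m' * x) + 1"
    unfolding e EE_lin m1 EE_one by simp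
  have "EE x m (\<lambda>k. real k ^ 4) = EE x (Suc m') (\<lambda>k. real k * real k ^ 3)" unfolding Suc
    by (rule EE_cong) (simp add: power3_eq_cube power4_eq_xxxx)
  also have "\<dots> = real (Suc m') * x * (EE x m' (\<lambda>k. real k ^ 3) + 3 * EE x m' (\<lambda>k. real k ^ 2) + 3 * (real m' * x) + 1)" unfolding EE_shift a ..
  also have "\<dots> = real m * (real m - 1) * (real m - 2) * (real m - 3) * x^4
   + 6 * real m * (real m - 1) * (real m - 2) * x^3 + 7 * real m * (real m - 1) * x^2 + real m * x"
  proof -
    have rm: "real m = real m' + 1" using Suc by simp
    show ?thesis unfolding m2 m3 rm of_nat_Suc using poly4[of "real m'" x] by (simp only: add.commute)
  qed
  finally show ?thesis .
qed

lemma central4: "EE x m (\<lambda>k. (real k - real m * x) ^ 4) = 3 * (real m)^2 * (x*(1-x))^2 + real m * (x*(1-x)) * (1 - 6*(x*(1-x)))"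
proof -
  have e: "EE x m (\<lambda>k. (real k - real m * x) ^ 4) = EE x m (\<lambda>k. 1 * real k ^ 4 + ((-4*real m*x) * real k ^ 3 + ((6*(real m*x)^2) * real k^2 + ((-4*(real m*x)^3) * real k + (real m * x)^4 * 1))))"
    by (rule EE_cong) (simp add: power2_eq_square power3_eq_cube power4_eq_xxxx algebra_simps)
  have "EE x m (\<lambda>k. (real k - real m * x) ^ 4) = EE x m (\<lambda>k. real k ^ 4) + (-4*real m*x) * EE x m (\<lambda>k. real k ^ 3)
     + (6*(real m*x)^2) * EE x m (\<lambda>k. real k ^ 2) + (-4*(real m*x)^3) * (real m * x) + (real m * x)^4"
    unfolding e EE_lin m1 EE_one by (simp add: EE_const)
  then show ?thesis unfolding m2 m3 m4 polyc4 .
qed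

lemma central2: "EE x m (\<lambda>k. (real k - real m * x) ^ 2) = real m * (x*(1-x))"
proof -
  have e: "EE x m (\<lambda>k. (real k - real m * x) ^ 2) = EE x m (\<lambda>k. 1 * real k ^ 2 + ((-2*real m*x) * real k + (real m * x)^2 * 1))"
    by (rule EE_cong) (simp add: power2_eq_square algebra_simps)
  show ?thesis unfolding e EE_lin m1 m2 EE_one by (simp add: EE_const power2_eq_square algebra_simps)
qed

lemma central1: "EE x m (\<lambda>k. real k - real m * x) = 0"
proof -
  have e: "EE x m (\<lambda>k. real k - real m * x) = EE x m (\<lambda>k. 1 * real k + (-real m * x) * 1)"
    by (rule EE_cong) simp
  show ?thesis unfolding e EE_lin m1 EE_one by (simp add: EE_const)
qed



lemma EE_add: "EE x m (\<lambda>k. p k + q k) = EE x m p + EE x m q"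
  by (simp add: EE_def sum.distrib algebra_simps)

lemma EE_scale: "EE x m (\<lambda>k. c * p k) = c * EE x m p"
  by (simp add: EE_def sum_distrib_left algebra_simps)

lemma EE_diff: "EE x m (\<lambda>k. p k - q k) = EE x m p - EE x m q"
  by (simp add: EE_def sum_subtractf algebra_simps)

lemma EE_mono:
  assumes "0 \<le> x" "x \<le> 1" "\<And>k. k \<le> m \<Longrightarrow> p k \<le> q k"
  shows "EE x m p \<le> EE x m q"
  unfolding EE_def using assms by (intro sum_mono mult_left_mono) auto

lemma EE_abs:
  assumes "0 \<le> x" "x \<le> 1"
  shows "\<bar>EE x m p\<bar> \<le> EE x m (\<lambda>k. \<bar>p k\<bar>)"
  unfolding EE_def
  apply (rule order_trans[OF sum_abs])
  using assms by (auto intro!: sum_mono simp: abs_mult)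

lemma real_ineq:
  fixes r n v V T3 T4 :: real
  assumes r: "r \<ge> 1" and n: "n = r^2" and v: "0 \<le> v" "v \<le> 1/4" and V: "V = v / n"
    and T4: "n^2 * T4 \<le> 3 * v^2 + v / n" and T3: "T3 \<le> (V / r + r * T4) / 2"
  shows "n * T3 \<le> 2 * v / r" "n * T4 \<le> 2 * v / r" "n * V^2 \<le> v / r"
proof -
  have r0: "r > 0" using r by simp
  have nr: "n \<ge> r" using r n by (simp add: power2_eq_square)
  have n0: "n > 0" using nr r0 by simp
  have vv: "v^2 \<le> v/4"
  proof -
    have "v * (v * 4) \<le> v * 1" using v by (intro mult_left_mono) auto
    then show ?thesis by (simp add: power2_eq_square algebra_simps)
  qed
  have vn: "v / n \<le> v"
  proof -
    have "v * 1 \<le> v * n" using v nr r by (intro mult_left_mono) auto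
    then show ?thesis using n0 by (simp add: divide_le_eq)
  qed
  have A: "n^2 * T4 \<le> 7/4 * v" using T4 vv vn by linarith
  have B: "n * T4 \<le> 7/4 * v / n"
  proof -
    have e: "n * T4 = (n^2 * T4) / n" using n0 by (simp add: power2_eq_square)
    have "n^2 * T4 / n \<le> (7/4 * v) / n" by (rule divide_right_mono[OF A]) (use n0 in simp)
    then show ?thesis unfolding e by simp
  qed
  have vnr: "v / n \<le> v / r" using v nr r0 by (simp add: frac_le)
  have b1: "7/4 * v / n \<le> 7/4 * (v / r)" using vnr by simp
  have w: "0 \<le> v / r" using v r0 by simp
  have b2: "7/4 * (v / r) \<le> 2 * (v / r)" by (rule mult_right_mono) (use w in auto)
  show "n * T4 \<le> 2 * v / r" using B b1 b2 by simp
  have C: "r * T4 \<le> 7/4 * v / (n * r)"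
  proof -
    have eq: "(r * T4) * (n * r) = n^2 * T4" using n by (simp add: power2_eq_square mult_ac)
    have "(r * T4) * (n * r) \<le> 7/4 * v" unfolding eq by (rule A)
    moreover have "0 < n * r" using n0 r0 by simp
    ultimately show ?thesis by (simp add: pos_le_divide_eq)
  qed
  have "n * T3 \<le> n * ((V / r + r * T4) / 2)" using T3 n0 by simp
  also have "\<dots> = (v / r + n * (r * T4)) / 2" using V n0 by (simp add: field_simps)
  also have "\<dots> \<le> (v / r + 7/4 * v / r) / 2" using C n0 r0 by (simp add: field_simps)
  also have "\<dots> \<le> 2 * v / r" using v r0 by (simp add: field_simps)
  finally show "n * T3 \<le> 2 * v / r" .
  have "n * V^2 = v^2 / n" using V n0 by (simp add: power2_eq_square)
  also have "\<dots> \<le> (v/4) / n" by (rule divide_right_mono[OF vv]) (use n0 in simp)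
  also have "\<dots> \<le> v / r"
  proof -
    have "(v/4)/n = (1/4)*(v/n)" by simp
    moreover have "0 \<le> v / n" using v n0 by simp
    ultimately show ?thesis using vnr by linarith
  qed
  finally show "n * V^2 \<le> v / r" .
qed

lemma cube_le:
  fixes y r :: real
  assumes r: "r > 0"
  shows "\<bar>y\<bar>^3 \<le> (1 / (2*r)) * y^2 + (r/2) * y^4"
proof -
  have "0 \<le> y^2 * (1 - r*\<bar>y\<bar>)^2" by simp
  also have "y^2 * (1 - r*\<bar>y\<bar>)^2 = y^2 - 2*r*\<bar>y\<bar>^3 + r^2*y^4"
  proof -
    have "y^2 = \<bar>y\<bar>^2" by simp
    then show ?thesis by (simp add: power2_eq_square power3_eq_cube power4_eq_xxxx algebra_simps)
  qed
  finally have "2*r*\<bar>y\<bar>^3 \<le> y^2 + r^2*y^4" by simp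
  then have "\<bar>y\<bar>^3 \<le> (y^2 + r^2*y^4) / (2*r)" using r by (simp add: pos_le_divide_eq mult_ac)
  also have "\<dots> = (1 / (2*r)) * y^2 + (r/2) * y^4" using r by (simp add: field_simps power2_eq_square)
  finally show ?thesis .
qed

lemma v_le: "0 \<le> x \<Longrightarrow> x \<le> 1 \<Longrightarrow> 0 \<le> x * (1 - x) \<and> x * (1 - x) \<le> (1::real) / 4"
proof -
  assume "0 \<le> x" "x \<le> 1"
  moreover have "0 \<le> (x - 1/2)^2" by simp
  moreover have "x * x \<le> x * 1" using \<open>0 \<le> x\<close> \<open>x \<le> 1\<close> by (intro mult_left_mono) auto
  ultimately show ?thesis by (simp add: power2_eq_square algebra_simps)
qed



lemma main_EE:
  fixes R S Y :: "nat \<Rightarrow> real"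
  assumes x: "0 \<le> x" "x \<le> 1" and n: "n \<ge> 1"
    and Y: "\<And>k. Y k = real k / real n - x"
    and R: "\<And>k. k \<le> n \<Longrightarrow> \<bar>R k\<bar> \<le> Kf * Y k ^ 2"
    and S: "\<And>k. k \<le> n \<Longrightarrow> \<bar>S k\<bar> \<le> Kg * Y k ^ 2"
    and K: "Kf \<ge> 0" "Kg \<ge> 0" and a: "\<bar>a\<bar> \<le> A" and b: "\<bar>b\<bar> \<le> B"
  shows "real n * \<bar>EE x n (\<lambda>k. (f0 + a * Y k + R k) * (g0 + b * Y k + S k))
      - EE x n (\<lambda>k. f0 + a * Y k + R k) * EE x n (\<lambda>k. g0 + b * Y k + S k)
      - x * (1 - x) / real n * a * b\<bar>
    \<le> (2*A*Kg + 2*B*Kf + 3*Kf*Kg) * (x * (1 - x)) / sqrt (real n)"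
proof -
  define v where "v = x * (1 - x)"
  have v: "0 \<le> v" "v \<le> 1/4" using v_le[OF x] unfolding v_def by auto
  have n0: "real n > 0" using n by simp
  define r where "r = sqrt (real n)"
  have r1: "r \<ge> 1" using n unfolding r_def by simp
  have rn: "real n = r^2" unfolding r_def by simp
  have Yk: "Y k = (1 / real n) * (real k - real n * x)" for k using n0 unfolding Y by (simp add: field_simps)
  have M1: "EE x n Y = 0"
  proof -
    have "EE x n Y = EE x n (\<lambda>k. (1 / real n) * (real k - real n * x))" by (rule EE_cong) (rule Yk)
    then show ?thesis unfolding EE_scale central1 by simp
  qed
  have M2: "EE x n (\<lambda>k. Y k ^ 2) = v / real n"
  proof -
    have "EE x n (\<lambda>k. Y k ^ 2) = EE x n (\<lambda>k. (1 / real n)^2 * (real k - real n * x)^2)"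
      by (rule EE_cong) (simp only: Yk power_mult_distrib)
    then show ?thesis unfolding EE_scale central2 v_def using n0 by (simp add: power2_eq_square)
  qed
  have M4: "EE x n (\<lambda>k. Y k ^ 4) = (3 * (real n)^2 * v^2 + real n * v * (1 - 6 * v)) / real n ^ 4"
  proof -
    have "EE x n (\<lambda>k. Y k ^ 4) = EE x n (\<lambda>k. (1 / real n)^4 * (real k - real n * x)^4)"
      by (rule EE_cong) (simp only: Yk power_mult_distrib)
    then show ?thesis unfolding EE_scale central4 v_def by (simp add: field_simps)
  qed
  define T4 where "T4 = EE x n (\<lambda>k. Y k ^ 4)"
  define T3 where "T3 = EE x n (\<lambda>k. \<bar>Y k\<bar> ^ 3)"
  define V where "V = v / real n"
  have T4b: "(real n)^2 * T4 \<le> 3 * v^2 + v / real n"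
  proof -
    have "(real n)^2 * T4 = 3 * v^2 + v * (1 - 6 * v) / real n"
      unfolding T4_def M4 using n0 by (simp add: field_simps power2_eq_square power4_eq_xxxx)
    also have "\<dots> \<le> 3 * v^2 + v / real n"
    proof -
      have "v * (1 - 6 * v) \<le> v" using v by (simp add: mult_left_le)
      then show ?thesis using n0 by (simp add: divide_right_mono)
    qed
    finally show ?thesis .
  qed
  have T3b: "T3 \<le> (V / r + r * T4) / 2"
  proof -
    have r0: "r > 0" using r1 by simp
    have "T3 \<le> EE x n (\<lambda>k. (1 / (2*r)) * Y k ^ 2 + (r/2) * Y k ^ 4)"
      unfolding T3_def by (rule EE_mono[OF x]) (rule cube_le[OF r0])
    also have "\<dots> = (V / r + r * T4) / 2" unfolding EE_add EE_scale M2 T4_def V_def by (simp add: field_simps)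
    finally show ?thesis .
  qed
  have I: "real n * T3 \<le> 2 * v / r" "real n * T4 \<le> 2 * v / r" "real n * V^2 \<le> v / r"
    using real_ineq[OF r1 rn v V_def T4b T3b] by auto
  have T3pos: "T3 \<ge> 0" unfolding T3_def using EE_mono[OF x, of n "\<lambda>k. 0" "\<lambda>k. \<bar>Y k\<bar>^3"] EE_const[of x n 0] by simp
  have T4pos: "T4 \<ge> 0" unfolding T4_def using EE_mono[OF x, of n "\<lambda>k. 0" "\<lambda>k. Y k^4"] EE_const[of x n 0] by simp
  have Vpos: "V \<ge> 0" unfolding V_def using v n0 by simp
  have EF: "EE x n (\<lambda>k. f0 + a * Y k + R k) = f0 + EE x n R"
    unfolding EE_add EE_scale EE_const M1 by simp
  have EG: "EE x n (\<lambda>k. g0 + b * Y k + S k) = g0 + EE x n S"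
    unfolding EE_add EE_scale EE_const M1 by simp
  have EFG: "EE x n (\<lambda>k. (f0 + a * Y k + R k) * (g0 + b * Y k + S k)) =
     f0 * g0 + f0 * EE x n S + g0 * EE x n R + (a * b) * EE x n (\<lambda>k. Y k ^ 2)
     + a * EE x n (\<lambda>k. Y k * S k) + b * EE x n (\<lambda>k. Y k * R k) + EE x n (\<lambda>k. R k * S k)"
  proof -
    have "EE x n (\<lambda>k. (f0 + a * Y k + R k) * (g0 + b * Y k + S k)) =
      EE x n (\<lambda>k. (f0 * g0) + ((f0 * b + a * g0) * Y k + (f0 * S k + (g0 * R k + ((a * b) * Y k ^ 2
        + (a * (Y k * S k) + (b * (Y k * R k) + R k * S k)))))))"
      by (rule EE_cong) (simp add: algebra_simps power2_eq_square)
    then show ?thesis unfolding EE_add EE_scale EE_const M1 by simp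
  qed
  define D where "D = EE x n (\<lambda>k. (f0 + a * Y k + R k) * (g0 + b * Y k + S k))
      - EE x n (\<lambda>k. f0 + a * Y k + R k) * EE x n (\<lambda>k. g0 + b * Y k + S k)
      - x * (1 - x) / real n * a * b"
  have Deq: "D = a * EE x n (\<lambda>k. Y k * S k) + b * EE x n (\<lambda>k. Y k * R k) + EE x n (\<lambda>k. R k * S k)
      - EE x n R * EE x n S"
    unfolding D_def EFG EF EG M2 v_def by (simp add: algebra_simps)
  have B1: "\<bar>EE x n (\<lambda>k. Y k * S k)\<bar> \<le> Kg * T3"
  proof -
    have "\<bar>EE x n (\<lambda>k. Y k * S k)\<bar> \<le> EE x n (\<lambda>k. \<bar>Y k * S k\<bar>)" by (rule EE_abs[OF x])
    also have "\<dots> \<le> EE x n (\<lambda>k. Kg * \<bar>Y k\<bar>^3)"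
    proof (rule EE_mono[OF x])
      fix k assume k: "k \<le> n"
      have "\<bar>Y k * S k\<bar> = \<bar>Y k\<bar> * \<bar>S k\<bar>" by (simp add: abs_mult)
      also have "\<dots> \<le> \<bar>Y k\<bar> * (Kg * Y k^2)" by (rule mult_left_mono[OF S[OF k]]) simp
      also have "\<dots> = Kg * \<bar>Y k\<bar>^3"
      proof -
        have "Y k^2 = \<bar>Y k\<bar>^2" by simp
        then show ?thesis by (simp only:) (simp add: power2_eq_square power3_eq_cube mult_ac)
      qed
      finally show "\<bar>Y k * S k\<bar> \<le> Kg * \<bar>Y k\<bar>^3" .
    qed
    finally show ?thesis unfolding EE_scale T3_def .
  qed
  have B2: "\<bar>EE x n (\<lambda>k. Y k * R k)\<bar> \<le> Kf * T3"
  proof -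
    have "\<bar>EE x n (\<lambda>k. Y k * R k)\<bar> \<le> EE x n (\<lambda>k. \<bar>Y k * R k\<bar>)" by (rule EE_abs[OF x])
    also have "\<dots> \<le> EE x n (\<lambda>k. Kf * \<bar>Y k\<bar>^3)"
    proof (rule EE_mono[OF x])
      fix k assume k: "k \<le> n"
      have "\<bar>Y k * R k\<bar> = \<bar>Y k\<bar> * \<bar>R k\<bar>" by (simp add: abs_mult)
      also have "\<dots> \<le> \<bar>Y k\<bar> * (Kf * Y k^2)" by (rule mult_left_mono[OF R[OF k]]) simp
      also have "\<dots> = Kf * \<bar>Y k\<bar>^3"
      proof -
        have "Y k^2 = \<bar>Y k\<bar>^2" by simp
        then show ?thesis by (simp only:) (simp add: power2_eq_square power3_eq_cube mult_ac)
      qed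
      finally show "\<bar>Y k * R k\<bar> \<le> Kf * \<bar>Y k\<bar>^3" .
    qed
    finally show ?thesis unfolding EE_scale T3_def .
  qed
  have B3: "\<bar>EE x n (\<lambda>k. R k * S k)\<bar> \<le> (Kf * Kg) * T4"
  proof -
    have "\<bar>EE x n (\<lambda>k. R k * S k)\<bar> \<le> EE x n (\<lambda>k. \<bar>R k * S k\<bar>)" by (rule EE_abs[OF x])
    also have "\<dots> \<le> EE x n (\<lambda>k. (Kf * Kg) * Y k^4)"
    proof (rule EE_mono[OF x])
      fix k assume k: "k \<le> n"
      have "\<bar>R k * S k\<bar> = \<bar>R k\<bar> * \<bar>S k\<bar>" by (simp add: abs_mult)
      also have "\<dots> \<le> (Kf * Y k^2) * (Kg * Y k^2)" by (rule mult_mono[OF R[OF k] S[OF k]]) (use K in auto)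
      also have "\<dots> = (Kf * Kg) * Y k^4" by (simp add: power2_eq_square power4_eq_xxxx mult_ac)
      finally show "\<bar>R k * S k\<bar> \<le> (Kf * Kg) * Y k^4" .
    qed
    finally show ?thesis unfolding EE_scale T4_def .
  qed
  have B4: "\<bar>EE x n R\<bar> \<le> Kf * V"
  proof -
    have "\<bar>EE x n R\<bar> \<le> EE x n (\<lambda>k. \<bar>R k\<bar>)" by (rule EE_abs[OF x])
    also have "\<dots> \<le> EE x n (\<lambda>k. Kf * Y k^2)" by (rule EE_mono[OF x]) (rule R)
    finally show ?thesis unfolding EE_scale M2 V_def .
  qed
  have B5: "\<bar>EE x n S\<bar> \<le> Kg * V"
  proof -
    have "\<bar>EE x n S\<bar> \<le> EE x n (\<lambda>k. \<bar>S k\<bar>)" by (rule EE_abs[OF x])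
    also have "\<dots> \<le> EE x n (\<lambda>k. Kg * Y k^2)" by (rule EE_mono[OF x]) (rule S)
    finally show ?thesis unfolding EE_scale M2 V_def .
  qed
  have Dle: "\<bar>D\<bar> \<le> A * (Kg * T3) + B * (Kf * T3) + (Kf * Kg) * T4 + (Kf * V) * (Kg * V)"
  proof -
    have "\<bar>D\<bar> \<le> \<bar>a\<bar> * \<bar>EE x n (\<lambda>k. Y k * S k)\<bar> + \<bar>b\<bar> * \<bar>EE x n (\<lambda>k. Y k * R k)\<bar>
        + \<bar>EE x n (\<lambda>k. R k * S k)\<bar> + \<bar>EE x n R\<bar> * \<bar>EE x n S\<bar>"
      unfolding Deq by (simp add: abs_mult[symmetric])
    moreover have "\<bar>a\<bar> * \<bar>EE x n (\<lambda>k. Y k * S k)\<bar> \<le> A * (Kg * T3)"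
      by (rule mult_mono[OF a B1]) (use a K T3pos in auto)
    moreover have "\<bar>b\<bar> * \<bar>EE x n (\<lambda>k. Y k * R k)\<bar> \<le> B * (Kf * T3)"
      by (rule mult_mono[OF b B2]) (use b K T3pos in auto)
    moreover have "\<bar>EE x n R\<bar> * \<bar>EE x n S\<bar> \<le> (Kf * V) * (Kg * V)"
      by (rule mult_mono[OF B4 B5]) (use K Vpos in auto)
    ultimately show ?thesis using B3 by linarith
  qed
  have A0: "A \<ge> 0" and B0: "B \<ge> 0" using a b by auto
  have "real n * \<bar>D\<bar> \<le> real n * (A * (Kg * T3) + B * (Kf * T3) + (Kf * Kg) * T4 + (Kf * V) * (Kg * V))"
    using Dle n0 by simp
  also have "\<dots> = (A * Kg + B * Kf) * (real n * T3) + (Kf * Kg) * (real n * T4) + (Kf * Kg) * (real n * V^2)"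
    by (simp add: algebra_simps power2_eq_square)
  also have "\<dots> \<le> (A * Kg + B * Kf) * (2 * v / r) + (Kf * Kg) * (2 * v / r) + (Kf * Kg) * (v / r)"
    using I A0 B0 K by (intro add_mono mult_left_mono) auto
  also have "\<dots> = (2*A*Kg + 2*B*Kf + 3*Kf*Kg) * v / r" using r1 by (simp add: field_simps)
  finally show ?thesis unfolding D_def v_def r_def .
qed



lemma diff_bound:
  fixes h h' q q' :: "real \<Rightarrow> real"
  assumes ab: "a \<le> b" "0 \<le> a" "b \<le> 1"
    and dh: "\<And>u. u \<in> {a..b} \<Longrightarrow> (h has_real_derivative h' u) (at u within {0..1})"
    and dq: "\<And>u. u \<in> {a..b} \<Longrightarrow> (q has_real_derivative q' u) (at u within {0..1})"
    and le: "\<And>u. u \<in> {a..b} \<Longrightarrow> \<bar>h' u\<bar> \<le> q' u"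
  shows "\<bar>h b - h a\<bar> \<le> q b - q a"
proof -
  have cont: "continuous_on {a..b} (\<lambda>u. q u + c * h u)" for c
  proof -
    have "continuous (at u within {a..b}) (\<lambda>u. q u + c * h u)" if u: "u \<in> {a..b}" for u
    proof -
      have "((\<lambda>u. q u + c * h u) has_real_derivative (q' u + c * h' u)) (at u within {0..1})"
        using dh[OF u] dq[OF u] by (auto intro!: derivative_eq_intros)
      then have "continuous (at u within {0..1}) (\<lambda>u. q u + c * h u)" by (rule DERIV_continuous)
      then show ?thesis by (rule continuous_within_subset) (use ab in auto)
    qed
    then show ?thesis by (simp add: continuous_on_eq_continuous_within)
  qed
  have inc: "q a + c * h a \<le> q b + c * h b" if c: "\<bar>c\<bar> = 1" for c
  proof (rule DERIV_nonneg_imp_increasing_open[OF ab(1) _ cont])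
    fix u assume u: "a < u" "u < b"
    then have ui: "u \<in> interior {0..1::real}" using ab by auto
    have uab: "u \<in> {a..b}" using u by auto
    have "((\<lambda>u. q u + c * h u) has_real_derivative (q' u + c * h' u)) (at u within {0..1})"
      using dh[OF uab] dq[OF uab] by (auto intro!: derivative_eq_intros)
    then have "((\<lambda>u. q u + c * h u) has_real_derivative (q' u + c * h' u)) (at u)"
      using at_within_interior[OF ui] by simp
    moreover have "q' u + c * h' u \<ge> 0"
    proof -
      have "\<bar>c * h' u\<bar> \<le> q' u" using le[OF uab] c by (simp add: abs_mult)
      then show ?thesis by linarith
    qed
    ultimately show "\<exists>y. ((\<lambda>u. q u + c * h u) has_real_derivative y) (at u) \<and> 0 \<le> y" by blast
  qed
  show ?thesis using inc[of 1] inc[of "-1"] by (simp add: abs_le_iff)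
qed

lemma taylor3:
  assumes C: "C3_01 f f1 f2 f3" and M: "\<And>u. u \<in> {0..1} \<Longrightarrow> \<bar>f3 u\<bar> \<le> M"
    and s: "s \<in> {0..1}" and t: "t \<in> {0..1}"
  shows "\<bar>f s - f t - f1 t * (s - t) - f2 t * (s - t)^2 / 2\<bar> \<le> M * \<bar>s - t\<bar>^3 / 6"
proof -
  have D0: "\<And>u. u \<in> {0..1} \<Longrightarrow> (f has_real_derivative f1 u) (at u within {0..1})"
   and D1: "\<And>u. u \<in> {0..1} \<Longrightarrow> (f1 has_real_derivative f2 u) (at u within {0..1})"
   and D2: "\<And>u. u \<in> {0..1} \<Longrightarrow> (f2 has_real_derivative f3 u) (at u within {0..1})"
    using C unfolding C3_01_def by auto
  show ?thesis
  proof (cases "t \<le> s")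
    case True
    have S1: "\<bar>f2 u - f2 t\<bar> \<le> M * u - M * t" if u: "u \<in> {t..s}" for u
    proof (rule diff_bound[where h' = f3 and q' = "\<lambda>_. M"])
      show "t \<le> u" "0 \<le> t" "u \<le> 1" using u s t by auto
      fix v assume v: "v \<in> {t..u}"
      then have v01: "v \<in> {0..1}" using u s t by auto
      show "(f2 has_real_derivative f3 v) (at v within {0..1})" using D2[OF v01] .
      show "((\<lambda>v. M * v) has_real_derivative M) (at v within {0..1})" by (auto intro!: derivative_eq_intros)
      show "\<bar>f3 v\<bar> \<le> M" using M[OF v01] .
    qed
    have S2: "\<bar>(f1 u - f2 t * u) - (f1 t - f2 t * t)\<bar> \<le> M * (u - t)^2 / 2 - M * (t - t)^2 / 2" if u: "u \<in> {t..s}" for u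
    proof (rule diff_bound[where h' = "\<lambda>v. f2 v - f2 t" and q' = "\<lambda>v. M * (v - t)"])
      show "t \<le> u" "0 \<le> t" "u \<le> 1" using u s t by auto
      fix v assume v: "v \<in> {t..u}"
      then have v01: "v \<in> {0..1}" using u s t by auto
      show "((\<lambda>v. f1 v - f2 t * v) has_real_derivative f2 v - f2 t) (at v within {0..1})"
        using D1[OF v01] by (auto intro!: derivative_eq_intros)
      show "((\<lambda>v. M * (v - t)^2 / 2) has_real_derivative M * (v - t)) (at v within {0..1})"
        by (auto intro!: derivative_eq_intros)
      show "\<bar>f2 v - f2 t\<bar> \<le> M * (v - t)" using S1[of v] v u by (simp add: algebra_simps)
    qed
    have S3: "\<bar>(f s - f1 t * s - f2 t * (s - t)^2 / 2) - (f t - f1 t * t - f2 t * (t - t)^2 / 2)\<bar>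
        \<le> M * (s - t)^3 / 6 - M * (t - t)^3 / 6"
    proof (rule diff_bound[where h' = "\<lambda>v. f1 v - f1 t - f2 t * (v - t)" and q' = "\<lambda>v. M * (v - t)^2 / 2"])
      show "t \<le> s" "0 \<le> t" "s \<le> 1" using True s t by auto
      fix v assume v: "v \<in> {t..s}"
      then have v01: "v \<in> {0..1}" using s t by auto
      show "((\<lambda>v. f v - f1 t * v - f2 t * (v - t)^2 / 2) has_real_derivative f1 v - f1 t - f2 t * (v - t)) (at v within {0..1})"
        using D0[OF v01] by (auto intro!: derivative_eq_intros)
      show "((\<lambda>v. M * (v - t)^3 / 6) has_real_derivative M * (v - t)^2 / 2) (at v within {0..1})"
        by (auto intro!: derivative_eq_intros simp: power2_eq_square)
      show "\<bar>f1 v - f1 t - f2 t * (v - t)\<bar> \<le> M * (v - t)^2 / 2" using S2[OF v] by (simp add: algebra_simps)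
    qed
    then show ?thesis using True by (simp add: algebra_simps)
  next
    case False
    have S1: "\<bar>f2 t - f2 u\<bar> \<le> M * t - M * u" if u: "u \<in> {s..t}" for u
    proof (rule diff_bound[where h' = f3 and q' = "\<lambda>_. M"])
      show "u \<le> t" "0 \<le> u" "t \<le> 1" using u s t by auto
      fix v assume v: "v \<in> {u..t}"
      then have v01: "v \<in> {0..1}" using u s t by auto
      show "(f2 has_real_derivative f3 v) (at v within {0..1})" using D2[OF v01] .
      show "((\<lambda>v. M * v) has_real_derivative M) (at v within {0..1})" by (auto intro!: derivative_eq_intros)
      show "\<bar>f3 v\<bar> \<le> M" using M[OF v01] .
    qed
    have S2: "\<bar>(f1 t - f2 t * t) - (f1 u - f2 t * u)\<bar> \<le> - M * (t - t)^2 / 2 - (- M * (t - u)^2 / 2)" if u: "u \<in> {s..t}" for u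
    proof (rule diff_bound[where h' = "\<lambda>v. f2 v - f2 t" and q' = "\<lambda>v. M * (t - v)"])
      show "u \<le> t" "0 \<le> u" "t \<le> 1" using u s t by auto
      fix v assume v: "v \<in> {u..t}"
      then have v01: "v \<in> {0..1}" using u s t by auto
      show "((\<lambda>v. f1 v - f2 t * v) has_real_derivative f2 v - f2 t) (at v within {0..1})"
        using D1[OF v01] by (auto intro!: derivative_eq_intros)
      show "((\<lambda>v. - M * (t - v)^2 / 2) has_real_derivative M * (t - v)) (at v within {0..1})"
        by (auto intro!: derivative_eq_intros simp: field_simps)
      show "\<bar>f2 v - f2 t\<bar> \<le> M * (t - v)" using S1[of v] v u by (simp add: algebra_simps abs_minus_commute)
    qed
    have S3: "\<bar>(f t - f1 t * t - f2 t * (t - t)^2 / 2) - (f s - f1 t * s - f2 t * (s - t)^2 / 2)\<bar>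
        \<le> M * (t - t)^3 / 6 - M * (s - t)^3 / 6"
    proof (rule diff_bound[where h' = "\<lambda>v. f1 v - f1 t - f2 t * (v - t)" and q' = "\<lambda>v. M * (v - t)^2 / 2"])
      show "s \<le> t" "0 \<le> s" "t \<le> 1" using False s t by auto
      fix v assume v: "v \<in> {s..t}"
      then have v01: "v \<in> {0..1}" using s t by auto
      show "((\<lambda>v. f v - f1 t * v - f2 t * (v - t)^2 / 2) has_real_derivative f1 v - f1 t - f2 t * (v - t)) (at v within {0..1})"
        using D0[OF v01] by (auto intro!: derivative_eq_intros)
      show "((\<lambda>v. M * (v - t)^3 / 6) has_real_derivative M * (v - t)^2 / 2) (at v within {0..1})"
        by (auto intro!: derivative_eq_intros simp: power2_eq_square)
      have "(v - t)^2 = (t - v)^2" by (simp add: power2_commute)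
      then show "\<bar>f1 v - f1 t - f2 t * (v - t)\<bar> \<le> M * (v - t)^2 / 2" using S2[OF v] by (simp add: algebra_simps abs_minus_commute)
    qed
    have "\<bar>s - t\<bar>^3 = - ((s - t)^3)" using False by (simp add: abs_if power3_eq_cube algebra_simps)
    then show ?thesis using S3 by (simp add: algebra_simps abs_minus_commute)
  qed
qed

lemma C3_cont: "C3_01 f f1 f2 f3 \<Longrightarrow> continuous_on {0..1} f"
  unfolding C3_01_def continuous_on_eq_continuous_within
  by (auto intro: DERIV_continuous)

lemma sup_bound:
  assumes "continuous_on {0..1} f" "u \<in> {0..1}"
  shows "\<bar>f u\<bar> \<le> sup_norm01 f"
proof -
  have "continuous_on {0..1} (\<lambda>t. \<bar>f t\<bar>)" using assms(1) by (intro continuous_intros)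
  then have "compact ((\<lambda>t. \<bar>f t\<bar>) ` {0..1::real})" by (rule compact_continuous_image) simp
  then have "bdd_above ((\<lambda>t. \<bar>f t\<bar>) ` {0..1::real})" by (intro bounded_imp_bdd_above compact_imp_bounded)
  then show ?thesis unfolding sup_norm01_def using assms(2) by (rule cSUP_upper2) simp
qed

lemma interp:
  assumes C: "C3_01 f f1 f2 f3" and M0: "\<And>u. u \<in> {0..1} \<Longrightarrow> \<bar>f u\<bar> \<le> M"
    and M: "\<And>u. u \<in> {0..1} \<Longrightarrow> \<bar>f3 u\<bar> \<le> M" and t: "t \<in> {0..1}"
  shows "\<bar>f2 t\<bar> \<le> 80 * M \<and> \<bar>f1 t\<bar> \<le> 22 * M"
proof -
  obtain h where h: "h = 1/4 \<or> h = -1/4" and s1: "t + h \<in> {0..1}" and s2: "t + 2*h \<in> {0..1}"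
  proof (cases "t \<le> 1/2")
    case True then show ?thesis using that[of "1/4"] t by auto
  next
    case False then show ?thesis using that[of "-1/4"] t by auto
  qed
  have e1: "\<bar>f (t+h) - f t - f1 t * h - f2 t * h^2 / 2\<bar> \<le> M * \<bar>h\<bar>^3 / 6"
    using taylor3[OF C M s1 t] by simp
  have e2: "\<bar>f (t+2*h) - f t - f1 t * (2*h) - f2 t * (2*h)^2 / 2\<bar> \<le> M * \<bar>2*h\<bar>^3 / 6"
    using taylor3[OF C M s2 t] by simp
  have b0: "\<bar>f t\<bar> \<le> M" "\<bar>f (t+h)\<bar> \<le> M" "\<bar>f (t+2*h)\<bar> \<le> M" using M0 t s1 s2 by auto
  from h show ?thesis
  proof
    assume hh: "h = 1/4"
    have "\<bar>f2 t\<bar> \<le> 80 * M" using e1 e2 b0 unfolding hh abs_le_iff by (simp add: power2_eq_square power3_eq_cube; linarith)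
    moreover have "\<bar>f1 t\<bar> \<le> 22 * M" using e1 e2 b0 calculation unfolding hh abs_le_iff by (simp add: power2_eq_square power3_eq_cube; linarith)
    ultimately show ?thesis ..
  next
    assume hh: "h = -1/4"
    have "\<bar>f2 t\<bar> \<le> 80 * M" using e1 e2 b0 unfolding hh abs_le_iff by (simp add: power2_eq_square power3_eq_cube; linarith)
    moreover have "\<bar>f1 t\<bar> \<le> 22 * M" using e1 e2 b0 calculation unfolding hh abs_le_iff by (simp add: power2_eq_square power3_eq_cube; linarith)
    ultimately show ?thesis ..
  qed
qed



lemma bern_EE: "bernstein n h x = EE x n (\<lambda>k. h (real k / real n))"
  by (simp add: bernstein_def EE_def)

lemma fun_bounds:
  assumes C: "C3_01 f f1 f2 f3" and x: "x \<in> {0..1}" and n: "n \<ge> 1"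
  defines "Mf \<equiv> max (sup_norm01 f) (sup_norm01 f3)"
  shows "Mf \<ge> 0" "\<bar>f1 x\<bar> \<le> 22 * Mf"
    "\<And>k. k \<le> n \<Longrightarrow> \<bar>f (real k / real n) - f x - f1 x * (real k / real n - x)\<bar> \<le> (41 * Mf) * (real k / real n - x)^2"
proof -
  have cf: "continuous_on {0..1} f" by (rule C3_cont[OF C])
  have cf3: "continuous_on {0..1} f3" using C unfolding C3_01_def by auto
  have M0: "\<And>u. u \<in> {0..1} \<Longrightarrow> \<bar>f u\<bar> \<le> Mf" unfolding Mf_def using sup_bound[OF cf] by (meson max.coboundedI1)
  have M3: "\<And>u. u \<in> {0..1} \<Longrightarrow> \<bar>f3 u\<bar> \<le> Mf" unfolding Mf_def using sup_bound[OF cf3] by (meson max.coboundedI2)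
  show "Mf \<ge> 0" using M0[of 0] by simp
  then have Mpos: "Mf \<ge> 0" .
  have ip: "\<bar>f2 x\<bar> \<le> 80 * Mf \<and> \<bar>f1 x\<bar> \<le> 22 * Mf" by (rule interp[OF C M0 M3 x])
  then show "\<bar>f1 x\<bar> \<le> 22 * Mf" by simp
  fix k assume k: "k \<le> n"
  define y where "y = real k / real n - x"
  have s: "real k / real n \<in> {0..1}" using k n by simp
  have ty: "\<bar>f (real k / real n) - f x - f1 x * y - f2 x * y^2 / 2\<bar> \<le> Mf * \<bar>y\<bar>^3 / 6"
    using taylor3[OF C M3 s x] unfolding y_def .
  have y1: "\<bar>y\<bar> \<le> 1"
  proof -
    have a: "0 \<le> real k / real n" "real k / real n \<le> 1" using s by auto
    have b: "0 \<le> x" "x \<le> 1" using x by auto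
    show ?thesis unfolding y_def abs_le_iff using a b by linarith
  qed
  have y3: "\<bar>y\<bar>^3 \<le> y^2"
  proof -
    have "\<bar>y\<bar>^3 = \<bar>y\<bar> * y^2" by (simp add: power3_eq_cube power2_eq_square abs_mult_self_eq)
    also have "\<dots> \<le> 1 * y^2" by (rule mult_right_mono[OF y1]) simp
    finally show ?thesis by simp
  qed
  have t1: "Mf * \<bar>y\<bar>^3 / 6 \<le> Mf * y^2 / 6" using y3 Mpos by (simp add: mult_left_mono divide_right_mono)
  have t2: "\<bar>f2 x * y^2 / 2\<bar> \<le> 40 * Mf * y^2"
  proof -
    have "\<bar>f2 x * y^2 / 2\<bar> = \<bar>f2 x\<bar> * y^2 / 2" by (simp add: abs_mult)
    also have "\<dots> \<le> (80 * Mf) * y^2 / 2" using ip by (intro divide_right_mono mult_right_mono) auto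
    finally show ?thesis by simp
  qed
  have "\<bar>f (real k / real n) - f x - f1 x * y\<bar> \<le> 40 * Mf * y^2 + Mf * y^2 / 6"
    using ty t1 t2 by linarith
  also have "\<dots> \<le> (41 * Mf) * y^2" using Mpos by simp
  finally show "\<bar>f (real k / real n) - f x - f1 x * (real k / real n - x)\<bar> \<le> (41 * Mf) * (real k / real n - x)^2"
    unfolding y_def .
qed

theorem corollary2p3:
  shows "\<exists>C>0. \<forall>(f::real\<Rightarrow>real) f1 f2 f3 (g::real\<Rightarrow>real) g1 g2 g3 (x::real) (n::nat).
     C3_01 f f1 f2 f3 \<longrightarrow> C3_01 g g1 g2 g3 \<longrightarrow> x \<in> {0..1} \<longrightarrow> n \<ge> 1 \<longrightarrow>
     real n * \<bar>bernstein n (\<lambda>t. f t * g t) x - bernstein n f x * bernstein n g x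
                 - x * (1 - x) / real n * f1 x * g1 x\<bar>
       \<le> C * x * (1 - x) * (1 / sqrt (real n))
           * max (sup_norm01 f) (sup_norm01 f3) * max (sup_norm01 g) (sup_norm01 g3)"
proof (intro exI[of _ 10000] conjI allI impI)
  fix f f1 f2 f3 g g1 g2 g3 :: "real \<Rightarrow> real" and x :: real and n :: nat
  assume Cf: "C3_01 f f1 f2 f3" and Cg: "C3_01 g g1 g2 g3" and x: "x \<in> {0..1}" and n: "n \<ge> 1"
  define Mf where "Mf = max (sup_norm01 f) (sup_norm01 f3)"
  define Mg where "Mg = max (sup_norm01 g) (sup_norm01 g3)"
  note bf = fun_bounds[OF Cf x n, folded Mf_def]
  note bg = fun_bounds[OF Cg x n, folded Mg_def]
  define Y where "Y = (\<lambda>k. real k / real n - x)"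
  define R where "R = (\<lambda>k. f (real k / real n) - f x - f1 x * Y k)"
  define S where "S = (\<lambda>k. g (real k / real n) - g x - g1 x * Y k)"
  have x01: "0 \<le> x" "x \<le> 1" using x by auto
  have eF: "bernstein n f x = EE x n (\<lambda>k. f x + f1 x * Y k + R k)"
    unfolding bern_EE by (rule EE_cong) (simp add: R_def)
  have eG: "bernstein n g x = EE x n (\<lambda>k. g x + g1 x * Y k + S k)"
    unfolding bern_EE by (rule EE_cong) (simp add: S_def)
  have eFG: "bernstein n (\<lambda>t. f t * g t) x = EE x n (\<lambda>k. (f x + f1 x * Y k + R k) * (g x + g1 x * Y k + S k))"
    unfolding bern_EE by (rule EE_cong) (simp add: R_def S_def)
  have main: "real n * \<bar>bernstein n (\<lambda>t. f t * g t) x - bernstein n f x * bernstein n g x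
                 - x * (1 - x) / real n * f1 x * g1 x\<bar>
     \<le> (2*(22*Mf)*(41*Mg) + 2*(22*Mg)*(41*Mf) + 3*(41*Mf)*(41*Mg)) * (x * (1 - x)) / sqrt (real n)"
    unfolding eF eG eFG
  proof (rule main_EE[OF x01 n])
    show "Y k = real k / real n - x" for k unfolding Y_def ..
    show "\<bar>R k\<bar> \<le> (41 * Mf) * Y k ^ 2" if "k \<le> n" for k using bf(3)[OF that] unfolding R_def Y_def .
    show "\<bar>S k\<bar> \<le> (41 * Mg) * Y k ^ 2" if "k \<le> n" for k using bg(3)[OF that] unfolding S_def Y_def .
    show "41 * Mf \<ge> 0" "41 * Mg \<ge> 0" using bf(1) bg(1) by auto
    show "\<bar>f1 x\<bar> \<le> 22 * Mf" "\<bar>g1 x\<bar> \<le> 22 * Mg" using bf(2) bg(2) .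
  qed
  have v: "0 \<le> x * (1 - x)" using v_le[OF x01] by simp
  have "(2*(22*Mf)*(41*Mg) + 2*(22*Mg)*(41*Mf) + 3*(41*Mf)*(41*Mg)) * (x * (1 - x)) / sqrt (real n)
      = 8651 * (Mf * Mg) * (x * (1 - x) / sqrt (real n))" using n by (simp add: field_simps)
  also have "\<dots> \<le> 10000 * (Mf * Mg) * (x * (1 - x) / sqrt (real n))"
    using bf(1) bg(1) v by (intro mult_right_mono) auto
  also have "\<dots> = 10000 * x * (1 - x) * (1 / sqrt (real n)) * Mf * Mg" using n by (simp add: field_simps)
  finally show "real n * \<bar>bernstein n (\<lambda>t. f t * g t) x - bernstein n f x * bernstein n g x
                 - x * (1 - x) / real n * f1 x * g1 x\<bar>
       \<le> 10000 * x * (1 - x) * (1 / sqrt (real n))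
           * max (sup_norm01 f) (sup_norm01 f3) * max (sup_norm01 g) (sup_norm01 g3)"
    using main unfolding Mf_def Mg_def by linarith
qed simp


end
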